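(* Let $n,k$ be integers with $1\le k\le n-3$, let $F$ be a finite field with $|F|\ge 2n$, let $\{\lambda_{i,j}: i\in[n],\ j\in\{0,1\}\}$ be $2n$ distinct elements of $F$, and let $\mathcal{C}$ be the set of all $C=(C_1,\dots,C_n)$, $C_i=(c_{i,b,a}: b\in\{1,2,3\},\ a\in\{0,\dots,2^n-1\})$, satisfying $\sum_{i=1}^n \lambda_{i,a_i}^t c_{i,b,a}=0$ for all $t\in\{0,\dots,n-k-1\}$, $b\in\{1,2,3\}$, $a\in\{0,\dots,2^n-1\}$. Let $\mathcal{R}\subseteq[n]\setminus\{1,2\}$ with $|\mathcal{R}|=k+1$. Then for every $C\in\mathcal{C}$: (1) the values $\{c_{1,b,a}: a\in\{0,\dots,2^n-1\},\ b\in\{1,2\}\}\cup\{c_{2,1,a}+c_{2,2,a(1,a_1\oplus 1)}: a\in\{0,\dots,2^n-1\}\}$ are uniquely determined by the values $\{c_{i,1,a}+c_{i,2,a(1,a_1\oplus 1)}: a\in\{0,\dots,2^n-1\},\ i\in\mathcal{R}\}$; (2) the values $\{c_{2,b,a}: a\in\{0,\dots,2^n-1\},\ b\in\{1,3\}\}\cup\{c_{1,1,a}+c_{1,3,a(2,a_2\oplus 1)}: a\in\{0,\dots,2^n-1\}\}$ are uniquely determined by the values $\{c_{i,1,a}+c_{i,3,a(2,a_2\oplus 1)}: a\in\{0,\dots,2^n-1\},\ i\in\mathcal{R}\}$. (Here "uniquely determined" means: any two codewords of $\mathcal{C}$ that agree on the latter values agree on the former values.)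
   Context: $[n]=\{1,\dots,n\}$. For $a\in\{0,\dots,2^n-1\}$, $(a_1,\dots,a_n)\in\{0,1\}^n$ denotes its $n$-digit binary expansion, and $a$ is identified with this tuple. For $i\in[n]$, $u\in\{0,1\}$, $a(i,u)$ denotes the element obtained from $a$ by replacing the $i$th digit $a_i$ by $u$; $\oplus$ denotes addition modulo 2. *)

theory Defs
  imports Main
begin

text \<open>i-th binary digit (i = 1..n) of a number a in {0..2^n-1};
  convention: a = sum of a_i * 2^(i-1).\<close>
definition digit :: "nat \<Rightarrow> nat \<Rightarrow> nat" where
  "digit a i = (a div 2 ^ (i - 1)) mod 2"

definition setdig :: "nat \<Rightarrow> nat \<Rightarrow> nat \<Rightarrow> nat" where
  "setdig a i u = a - digit a i * 2 ^ (i - 1) + u * 2 ^ (i - 1)"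

text \<open>The code: C i b a is c_{i,b,a}, for i in [n], b in {1,2,3}, a < 2^n.\<close>
definition code :: "nat \<Rightarrow> nat \<Rightarrow> (nat \<Rightarrow> nat \<Rightarrow> 'a::field) \<Rightarrow> (nat \<Rightarrow> nat \<Rightarrow> nat \<Rightarrow> 'a) set" where
  "code n k lam = {C. \<forall>t < n - k. \<forall>b \<in> {1,2,3}. \<forall>a < 2 ^ n.
      (\<Sum>i = 1..n. (lam i (digit a i)) ^ t * C i b a) = 0}"

end

theory Submission
  imports Defs
begin


lemma digit_bit: "digit a i = (if bit a (i - 1) then 1 else 0)"
  unfolding digit_def by (simp add: bit_iff_odd odd_iff_mod_2_eq_one split: if_split)

lemma unset_bit_nat_eq: "unset_bit m (a::nat) = a - (if bit a m then 2 ^ m else 0)"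
proof (cases "bit a m")
  case True
  have "set_bit m (unset_bit m a) = a"
    by (rule bit_eqI) (auto simp: bit_simps True)
  moreover have "set_bit m (unset_bit m a) = unset_bit m a + 2 ^ m"
    by (simp add: set_bit_eq bit_simps)
  ultimately show ?thesis using True by simp
next
  case False
  have "unset_bit m a = a" by (rule bit_eqI) (auto simp: bit_simps False)
  then show ?thesis using False by simp
qed

lemma setdig_bits: "u < 2 \<Longrightarrow> setdig a i u = (if u = 1 then set_bit (i - 1) a else unset_bit (i - 1) a)"
proof -
  assume u: "u < 2"
  have le: "bit a (i - 1) \<Longrightarrow> 2 ^ (i - 1) \<le> a"
    by (metis bit_imp_possible_bit bit_iff_odd div_less even_zero not_le)
  have "u = 0 \<or> u = 1" using u by auto
  then show ?thesis unfolding setdig_def digit_bit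
    using le by (auto simp: set_bit_eq unset_bit_nat_eq)
qed

lemma digit_setdig: "u < 2 \<Longrightarrow> 1 \<le> i \<Longrightarrow> 1 \<le> j \<Longrightarrow>
   digit (setdig a i u) j = (if j = i then u else digit a j)"
  unfolding setdig_bits digit_bit
  by (cases "u = 0") (auto simp: bit_simps)

lemma setdig_less: "u < 2 \<Longrightarrow> 1 \<le> i \<Longrightarrow> i \<le> n \<Longrightarrow> a < 2 ^ n \<Longrightarrow> setdig a i u < 2 ^ n"
  unfolding setdig_bits
  by (auto simp: take_bit_nat_eq_self_iff[symmetric] take_bit_set_bit_eq take_bit_unset_bit_eq)

lemma setdig_setdig: "1 \<le> i \<Longrightarrow>
  setdig (setdig a i ((digit a i + 1) mod 2)) i ((digit (setdig a i ((digit a i + 1) mod 2)) i + 1) mod 2) = a"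
proof -
  assume i: "1 \<le> i"
  have d: "(digit a i + 1) mod 2 < 2" by simp
  have e: "(digit a i + 1) mod 2 = (if bit a (i - 1) then 0 else 1)"
    by (simp add: digit_bit)
  show ?thesis
    unfolding digit_setdig[OF d i i] 
    apply (simp only: if_True simp_thms)
    unfolding e
    by (cases "bit a (i - 1)") (auto simp: setdig_bits digit_bit bit_simps intro!: bit_eqI)
qed



lemma vand:
  fixes x :: "'b \<Rightarrow> 'a::field"
  assumes "finite S"
  shows "inj_on x S \<Longrightarrow> (\<forall>t<card S. (\<Sum>j\<in>S. x j ^ t * y j) = 0) \<Longrightarrow> \<forall>j\<in>S. y j = 0"
  using assms
proof (induction S arbitrary: y rule: finite_induct)
  case empty
  then show ?case by simp
next
  case (insert j0 F)
  define y' where "y' j = (x j - x j0) * y j" for j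
  have cI: "card (insert j0 F) = Suc (card F)" using insert by simp
  have "\<forall>t<card F. (\<Sum>j\<in>F. x j ^ t * y' j) = 0"
  proof (intro allI impI)
    fix t assume t: "t < card F"
    have "(\<Sum>j\<in>F. x j ^ t * y' j) = (\<Sum>j\<in>insert j0 F. x j ^ t * y' j)"
      using insert by (simp add: y'_def)
    also have "\<dots> = (\<Sum>j\<in>insert j0 F. x j ^ Suc t * y j) - x j0 * (\<Sum>j\<in>insert j0 F. x j ^ t * y j)"
      by (simp add: y'_def sum_distrib_left sum_subtractf[symmetric] algebra_simps)
    also have "\<dots> = 0" using insert.prems(2) t cI
      by (metis Suc_mono less_SucI mult_zero_right diff_zero)
    finally show "(\<Sum>j\<in>F. x j ^ t * y' j) = 0" .
  qed
  moreover have "inj_on x F" using insert.prems by auto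
  ultimately have h: "\<forall>j\<in>F. y' j = 0" using insert.IH by blast
  have yF: "\<forall>j\<in>F. y j = 0"
  proof
    fix j assume j: "j \<in> F"
    then have "x j \<noteq> x j0" using insert.prems insert.hyps by (auto simp: inj_on_def)
    then show "y j = 0" using h j by (auto simp: y'_def)
  qed
  have "(\<Sum>j\<in>insert j0 F. x j ^ 0 * y j) = 0" using insert.prems(2) cI by (metis zero_less_Suc)
  then have "y j0 = 0" using insert.hyps yF by simp
  then show ?case using yF by simp
qed



lemma code_diff: "C \<in> code n k lam \<Longrightarrow> D \<in> code n k lam \<Longrightarrow> (\<lambda>i b a. C i b a - D i b a) \<in> code n k lam"
  unfolding code_def by (simp add: right_diff_distrib sum_subtractf)

lemma digit_less: "digit a i < 2" unfolding digit_def by simp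

lemma key:
  fixes E :: "nat \<Rightarrow> nat \<Rightarrow> nat \<Rightarrow> 'a::field" and lam :: "nat \<Rightarrow> nat \<Rightarrow> 'a"
  assumes E: "E \<in> code n k lam" and p1: "1 \<le> p" and pn: "p \<le> n"
    and Rs: "R \<subseteq> {1..n} - {p}" and Rc: "card R = k + 1" and kn: "k + 1 \<le> n"
    and q: "q \<in> {2,3}" and a: "a < 2 ^ n"
    and lam_dist: "inj_on (\<lambda>(i, j). lam i j) ({1..n} \<times> {0, 1})"
    and a'_def: "a' = setdig a p ((digit a p + 1) mod 2)"
    and z: "\<forall>i\<in>R. E i 1 a + E i q a' = 0"
  shows "E p 1 a = 0 \<and> E p q a' = 0 \<and> (\<forall>i\<in>{1..n}-R-{p}. E i 1 a + E i q a' = 0)"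
proof -
  have u2: "(digit a p + 1) mod 2 < 2" by simp
  have a'n: "a' < 2 ^ n" unfolding a'_def by (rule setdig_less[OF u2 p1 pn a])
  have dp: "digit a' p \<noteq> digit a p" unfolding a'_def digit_setdig[OF u2 p1 p1]
    using digit_less[of a p] by (auto simp: less_2_cases_iff)
  have dj: "digit a' j = digit a j" if "j \<noteq> p" "1 \<le> j" for j
    unfolding a'_def digit_setdig[OF u2 p1 that(2)] using that by simp
  define J where "J = insert (0::nat) ({1..n} - R)"
  define x where "x j = (if j = 0 then lam p (digit a' p) else lam j (digit a j))" for j
  define y where "y j = (if j = 0 then E p q a' else if j = p then E p 1 a else E j 1 a + E j q a')" for j
  have finJ: "finite J" unfolding J_def by simp
  have cardJ: "card J = n - k"
  proof -
    have "card ({1..n} - R) = n - (k + 1)" using Rs Rc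
      by (subst card_Diff_subset) (auto intro: finite_subset)
    then show ?thesis unfolding J_def using kn by simp
  qed
  have injJ: "inj_on x J"
  proof (rule inj_onI)
    fix i j assume i: "i \<in> J" and j: "j \<in> J" and e: "x i = x j"
    have pr: "\<And>i. i \<in> J \<Longrightarrow> i \<noteq> 0 \<Longrightarrow> (i, digit a i) \<in> {1..n} \<times> {0,1}"
      using digit_less by (auto simp: J_def less_2_cases_iff)
    have p0: "(p, digit a' p) \<in> {1..n} \<times> {0,1}" using p1 pn digit_less[of a' p] by (auto simp: less_2_cases_iff)
    have injp: "\<And>u v. u \<in> {1..n} \<times> {0,1} \<Longrightarrow> v \<in> {1..n} \<times> {0,1} \<Longrightarrow>
        (\<lambda>(i, j). lam i j) u = (\<lambda>(i, j). lam i j) v \<Longrightarrow> u = v"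
      using lam_dist by (meson inj_onD)
    show "i = j"
    proof (cases "i = 0"; cases "j = 0")
      assume "i = 0" "j = 0" then show ?thesis by simp
    next
      assume "i = 0" "j \<noteq> 0"
      then have "lam p (digit a' p) = lam j (digit a j)" using e by (simp add: x_def)
      then have "(p, digit a' p) = (j, digit a j)" by (intro injp[OF p0 pr[OF j \<open>j \<noteq> 0\<close>]]) simp
      then show ?thesis using dp by (metis prod.inject)
    next
      assume "i \<noteq> 0" "j = 0"
      then have "lam p (digit a' p) = lam i (digit a i)" using e by (simp add: x_def)
      then have "(p, digit a' p) = (i, digit a i)" by (intro injp[OF p0 pr[OF i \<open>i \<noteq> 0\<close>]]) simp
      then show ?thesis using dp by (metis prod.inject)
    next
      assume "i \<noteq> 0" "j \<noteq> 0"
      then have "lam i (digit a i) = lam j (digit a j)" using e by (simp add: x_def)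
      then have "(i, digit a i) = (j, digit a j)" by (intro injp[OF pr[OF i \<open>i \<noteq> 0\<close>] pr[OF j \<open>j \<noteq> 0\<close>]]) simp
      then show ?thesis by simp
    qed
  qed
  have eqs: "\<forall>t<card J. (\<Sum>j\<in>J. x j ^ t * y j) = 0"
  proof (intro allI impI)
    fix t assume t: "t < card J"
    then have tn: "t < n - k" using cardJ by simp
    have q': "q \<in> {1,2,3}" using q by auto
    have c1: "(\<Sum>i=1..n. lam i (digit a i) ^ t * E i 1 a) = 0"
      using E tn a unfolding code_def by blast
    have c2: "(\<Sum>i=1..n. lam i (digit a' i) ^ t * E i q a') = 0"
      using E tn a'n q' unfolding code_def by blast
    have "(\<Sum>j\<in>J. x j ^ t * y j) = (\<Sum>j\<in>{0..n}. x j ^ t * y j)"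
    proof (rule sum.mono_neutral_left)
      show "\<forall>i\<in>{0..n} - J. x i ^ t * y i = 0"
        using z Rs by (auto simp: J_def y_def)
    qed (auto simp: J_def)
    also have "\<dots> = x 0 ^ t * y 0 + (\<Sum>j=1..n. x j ^ t * y j)"
    proof -
      have "{0..n} = insert 0 {1..n}" by auto
      then show ?thesis by simp
    qed
    also have "(\<Sum>j=1..n. x j ^ t * y j) = (\<Sum>i=1..n. lam i (digit a i) ^ t * E i 1 a +
        (if i = p then 0 else lam i (digit a' i) ^ t * E i q a'))"
      by (rule sum.cong) (auto simp: x_def y_def dj distrib_left)
    also have "\<dots> = (\<Sum>i=1..n. lam i (digit a i) ^ t * E i 1 a) +
        ((\<Sum>i=1..n. lam i (digit a' i) ^ t * E i q a') - lam p (digit a' p) ^ t * E p q a')"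
    proof -
      have "(\<Sum>i=1..n. lam i (digit a' i) ^ t * E i q a') =
         lam p (digit a' p) ^ t * E p q a' + (\<Sum>i=1..n. (if i = p then 0 else lam i (digit a' i) ^ t * E i q a'))"
      proof -
        have "(\<Sum>i=1..n. (if i = p then 0 else lam i (digit a' i) ^ t * E i q a')) =
            (\<Sum>i\<in>{1..n} - {p}. lam i (digit a' i) ^ t * E i q a')"
          by (simp add: sum.If_cases Diff_eq)
        moreover have "(\<Sum>i=1..n. lam i (digit a' i) ^ t * E i q a') =
            lam p (digit a' p) ^ t * E p q a' + (\<Sum>i\<in>{1..n} - {p}. lam i (digit a' i) ^ t * E i q a')"
          using p1 pn by (intro sum.remove) auto
        ultimately show ?thesis by simp
      qed
      then show ?thesis by (simp add: sum.distrib)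
    qed
    finally show "(\<Sum>j\<in>J. x j ^ t * y j) = 0" using c1 c2 by (simp add: x_def y_def)
  qed
  have all0: "\<forall>j\<in>J. y j = 0" by (rule vand[OF finJ injJ eqs])
  have "0 \<in> J" "p \<in> J" using Rs p1 pn by (auto simp: J_def)
  then have "E p q a' = 0" "E p 1 a = 0" using all0 p1 by (auto simp: y_def split: if_splits)
  moreover have "\<forall>i\<in>{1..n}-R-{p}. E i 1 a + E i q a' = 0"
  proof
    fix i assume i: "i \<in> {1..n}-R-{p}"
    then have "i \<in> J" "i \<noteq> 0" "i \<noteq> p" by (auto simp: J_def)
    then show "E i 1 a + E i q a' = 0" using all0 by (auto simp: y_def)
  qed
  ultimately show ?thesis by simp
qed



lemma part:
  fixes lam :: "nat \<Rightarrow> nat \<Rightarrow> 'a::field"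
  assumes p1: "1 \<le> p" and pn: "p \<le> n"
    and Rs: "R \<subseteq> {1..n} - {p}" and Rc: "card R = k + 1" and kn: "k + 1 \<le> n"
    and q: "q \<in> {2,3}"
    and lam_dist: "inj_on (\<lambda>(i, j). lam i j) ({1..n} \<times> {0, 1})"
    and r: "r \<in> {1..n} - R - {p}"
  shows "\<forall>C \<in> code n k lam. \<forall>D \<in> code n k lam.
      (\<forall>a < 2 ^ n. \<forall>i \<in> R.
          C i 1 a + C i q (setdig a p ((digit a p + 1) mod 2))
        = D i 1 a + D i q (setdig a p ((digit a p + 1) mod 2)))
      \<longrightarrow> (\<forall>a < 2 ^ n.
            C p 1 a = D p 1 a \<and> C p q a = D p q a \<and>
            C r 1 a + C r q (setdig a p ((digit a p + 1) mod 2))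
              = D r 1 a + D r q (setdig a p ((digit a p + 1) mod 2)))"
proof (intro ballI impI allI)
  fix C D and a :: nat
  assume C: "C \<in> code n k lam" and D: "D \<in> code n k lam"
    and h: "\<forall>a < 2 ^ n. \<forall>i \<in> R.
          C i 1 a + C i q (setdig a p ((digit a p + 1) mod 2))
        = D i 1 a + D i q (setdig a p ((digit a p + 1) mod 2))"
    and a: "a < 2 ^ n"
  define E where "E = (\<lambda>i b a. C i b a - D i b a)"
  have E: "E \<in> code n k lam" unfolding E_def by (rule code_diff[OF C D])
  have z: "\<forall>i\<in>R. E i 1 b + E i q (setdig b p ((digit b p + 1) mod 2)) = 0" if "b < 2 ^ n" for b
    using h that unfolding E_def by (auto simp: algebra_simps)
  define a' where "a' = setdig a p ((digit a p + 1) mod 2)"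
  have a'n: "a' < 2 ^ n" unfolding a'_def by (rule setdig_less[OF _ p1 pn a]) simp
  note k1 = key[OF E p1 pn Rs Rc kn q a lam_dist refl z[OF a]]
  note k2 = key[OF E p1 pn Rs Rc kn q a'n lam_dist refl z[OF a'n]]
  have bk: "setdig a' p ((digit a' p + 1) mod 2) = a"
    unfolding a'_def by (rule setdig_setdig[OF p1])
  show "C p 1 a = D p 1 a \<and> C p q a = D p q a \<and>
            C r 1 a + C r q (setdig a p ((digit a p + 1) mod 2))
              = D r 1 a + D r q (setdig a p ((digit a p + 1) mod 2))"
    using k1 k2 r unfolding bk E_def by (auto simp: algebra_simps)
qed


theorem mainTheorem3:
  fixes n k :: nat and lam :: "nat \<Rightarrow> nat \<Rightarrow> 'a::field" and R :: "nat set"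
  assumes fin: "finite (UNIV :: 'a set)"
    and k1: "1 \<le> k" and kn: "k \<le> n - 3" and n3: "3 \<le> n"
    and card_F: "card (UNIV :: 'a set) \<ge> 2 * n"
    and lam_dist: "inj_on (\<lambda>(i, j). lam i j) ({1..n} \<times> {0, 1})"
    and R_sub: "R \<subseteq> {1..n} - {1, 2}" and R_card: "card R = k + 1"
  shows
   "(\<forall>C \<in> code n k lam. \<forall>D \<in> code n k lam.
      (\<forall>a < 2 ^ n. \<forall>i \<in> R.
          C i 1 a + C i 2 (setdig a 1 ((digit a 1 + 1) mod 2))
        = D i 1 a + D i 2 (setdig a 1 ((digit a 1 + 1) mod 2)))
      \<longrightarrow> (\<forall>a < 2 ^ n.
            C 1 1 a = D 1 1 a \<and> C 1 2 a = D 1 2 a \<and>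
            C 2 1 a + C 2 2 (setdig a 1 ((digit a 1 + 1) mod 2))
              = D 2 1 a + D 2 2 (setdig a 1 ((digit a 1 + 1) mod 2))))
    \<and>
    (\<forall>C \<in> code n k lam. \<forall>D \<in> code n k lam.
      (\<forall>a < 2 ^ n. \<forall>i \<in> R.
          C i 1 a + C i 3 (setdig a 2 ((digit a 2 + 1) mod 2))
        = D i 1 a + D i 3 (setdig a 2 ((digit a 2 + 1) mod 2)))
      \<longrightarrow> (\<forall>a < 2 ^ n.
            C 2 1 a = D 2 1 a \<and> C 2 3 a = D 2 3 a \<and>
            C 1 1 a + C 1 3 (setdig a 2 ((digit a 2 + 1) mod 2))
              = D 1 1 a + D 1 3 (setdig a 2 ((digit a 2 + 1) mod 2))))"
proof -
  have kn': "k + 1 \<le> n" using kn n3 by simp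
  have R1: "R \<subseteq> {1..n} - {1}" and R2: "R \<subseteq> {1..n} - {2}" using R_sub by auto
  have o1: "2 \<in> {1..n} - R - {1}" and o2: "(1::nat) \<in> {1..n} - R - {2}" using R_sub n3 by auto
  show ?thesis
  proof (rule conjI)
    show "\<forall>C \<in> code n k lam. \<forall>D \<in> code n k lam.
      (\<forall>a < 2 ^ n. \<forall>i \<in> R.
          C i 1 a + C i 2 (setdig a 1 ((digit a 1 + 1) mod 2))
        = D i 1 a + D i 2 (setdig a 1 ((digit a 1 + 1) mod 2)))
      \<longrightarrow> (\<forall>a < 2 ^ n.
            C 1 1 a = D 1 1 a \<and> C 1 2 a = D 1 2 a \<and>
            C 2 1 a + C 2 2 (setdig a 1 ((digit a 1 + 1) mod 2))
              = D 2 1 a + D 2 2 (setdig a 1 ((digit a 1 + 1) mod 2)))"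
      by (rule part[OF _ _ R1 R_card kn' _ lam_dist o1]) (use n3 in auto)
    show "\<forall>C \<in> code n k lam. \<forall>D \<in> code n k lam.
      (\<forall>a < 2 ^ n. \<forall>i \<in> R.
          C i 1 a + C i 3 (setdig a 2 ((digit a 2 + 1) mod 2))
        = D i 1 a + D i 3 (setdig a 2 ((digit a 2 + 1) mod 2)))
      \<longrightarrow> (\<forall>a < 2 ^ n.
            C 2 1 a = D 2 1 a \<and> C 2 3 a = D 2 3 a \<and>
            C 1 1 a + C 1 3 (setdig a 2 ((digit a 2 + 1) mod 2))
              = D 1 1 a + D 1 3 (setdig a 2 ((digit a 2 + 1) mod 2)))"
      by (rule part[OF _ _ R2 R_card kn' _ lam_dist o2]) (use n3 in auto)
  qed
qed

end
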